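(* Let $P$ be a finite poset and $X:P\to\mathcal{P}_{<\infty}$ a diagram of finite posets. If $p\in P$ is an up beat point of $P$, then $\operatorname{\underline{hocolim}} X$ collapses to $\operatorname{\underline{hocolim}} X|_{P\smallsetminus\{p\}}$. In particular, they are weak equivalent.
   Context: $P$ is viewed as a category with a unique arrow $p\to q$ iff $p\le q$; $\mathcal{P}_{<\infty}$ is the category of finite posets and order-preserving maps. Write $X_p=X(p)$, $f_{pq}=X(p\to q)$. $\operatorname{\underline{hocolim}} X$ is the poset on $\coprod_{p}X_p$ keeping the order within each $X_p$ and, for $x\in X_p$, $y\in X_q$, $p\le q$, setting $x\le y$ iff $f_{pq}(x)\le y$ in $X_q$. For a subposet $Q'\subseteq P$, $X|_{Q'}$ is the restricted diagram, and $\operatorname{\underline{hocolim}} X|_{Q'}$ is a subposet of $\operatorname{\underline{hocolim}} X$. For $x$ in a finite poset $Y$: $U_x=\{y\le x\}$, $\hat U_x=U_x\smallsetminus\{x\}$, $F_x=\{y\ge x\}$, $\hat F_x=F_x\smallsetminus\{x\}$. $x$ is an up beat point if $\hat F_x$ has a minimum, a down beat point if $\hat U_x$ has a maximum. A finite poset is contractible (dismantlable) if it can be reduced to a single point by removing beat points one at a time. $x$ is a down (resp. up) weak point if $\hat U_x$ (resp. $\hat F_x$) is contractible; removing a weak point is an elementary collapse, and $Y$ collapses to $Z$ if $Z$ is obtained from $Y$ by a sequence of elementary collapses. Two finite posets are weak equivalent if their order complexes (simplicial complexes of nonempty chains) are homotopy equivalent. *)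

theory Defs
  imports "HOL-Analysis.Analysis"
begin

definition finite_poset :: "'a set \<Rightarrow> ('a \<Rightarrow> 'a \<Rightarrow> bool) \<Rightarrow> bool" where
  "finite_poset S le \<longleftrightarrow> finite S \<and> (\<forall>x\<in>S. le x x)
     \<and> (\<forall>x\<in>S. \<forall>y\<in>S. le x y \<and> le y x \<longrightarrow> x = y)
     \<and> (\<forall>x\<in>S. \<forall>y\<in>S. \<forall>z\<in>S. le x y \<and> le y z \<longrightarrow> le x z)"

definition poset_diagram ::
  "'a set \<Rightarrow> ('a \<Rightarrow> 'a \<Rightarrow> bool) \<Rightarrow> ('a \<Rightarrow> 'b set) \<Rightarrow> ('a \<Rightarrow> 'b \<Rightarrow> 'b \<Rightarrow> bool)
   \<Rightarrow> ('a \<Rightarrow> 'a \<Rightarrow> 'b \<Rightarrow> 'b) \<Rightarrow> bool" where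
  "poset_diagram P le X leX f \<longleftrightarrow>
     (\<forall>p\<in>P. finite_poset (X p) (leX p))
   \<and> (\<forall>p\<in>P. \<forall>q\<in>P. le p q \<longrightarrow>
        (\<forall>x\<in>X p. f p q x \<in> X q)
      \<and> (\<forall>x\<in>X p. \<forall>y\<in>X p. leX p x y \<longrightarrow> leX q (f p q x) (f p q y)))
   \<and> (\<forall>p\<in>P. \<forall>x\<in>X p. f p p x = x)
   \<and> (\<forall>p\<in>P. \<forall>q\<in>P. \<forall>r\<in>P. le p q \<and> le q r \<longrightarrow> (\<forall>x\<in>X p. f q r (f p q x) = f p r x))"

text \<open>The Grothendieck-type construction: carrier of hocolim X restricted to Q.\<close>
definition hocolim_carrier :: "'a set \<Rightarrow> ('a \<Rightarrow> 'b set) \<Rightarrow> ('a \<times> 'b) set" where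
  "hocolim_carrier Q X = {(p, x). p \<in> Q \<and> x \<in> X p}"

text \<open>Order of hocolim X: (p,x) \<le> (q,y) iff p \<le> q and f p q x \<le> y in X q.
(For p = q this is the order of X p, since f p p is the identity.)\<close>
definition hocolim_le ::
  "('a \<Rightarrow> 'a \<Rightarrow> bool) \<Rightarrow> ('a \<Rightarrow> 'b \<Rightarrow> 'b \<Rightarrow> bool) \<Rightarrow> ('a \<Rightarrow> 'a \<Rightarrow> 'b \<Rightarrow> 'b)
   \<Rightarrow> ('a \<times> 'b) \<Rightarrow> ('a \<times> 'b) \<Rightarrow> bool" where
  "hocolim_le le leX f u v \<longleftrightarrow> le (fst u) (fst v) \<and> leX (fst v) (f (fst u) (fst v) (snd u)) (snd v)"

definition up_beat_point :: "('a \<Rightarrow> 'a \<Rightarrow> bool) \<Rightarrow> 'a set \<Rightarrow> 'a \<Rightarrow> bool" where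
  "up_beat_point le S x \<longleftrightarrow>
     (\<exists>m\<in>{y\<in>S. le x y \<and> y \<noteq> x}. \<forall>y\<in>{y\<in>S. le x y \<and> y \<noteq> x}. le m y)"

definition down_beat_point :: "('a \<Rightarrow> 'a \<Rightarrow> bool) \<Rightarrow> 'a set \<Rightarrow> 'a \<Rightarrow> bool" where
  "down_beat_point le S x \<longleftrightarrow>
     (\<exists>m\<in>{y\<in>S. le y x \<and> y \<noteq> x}. \<forall>y\<in>{y\<in>S. le y x \<and> y \<noteq> x}. le y m)"

text \<open>Contractible (dismantlable): reducible to a single point by removing beat points one at a time.\<close>
inductive contractible_poset :: "('a \<Rightarrow> 'a \<Rightarrow> bool) \<Rightarrow> 'a set \<Rightarrow> bool" for le where
  single: "contractible_poset le {x}"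
| remove: "\<lbrakk>x \<in> S; up_beat_point le S x \<or> down_beat_point le S x;
            contractible_poset le (S - {x})\<rbrakk> \<Longrightarrow> contractible_poset le S"

definition weak_point :: "('a \<Rightarrow> 'a \<Rightarrow> bool) \<Rightarrow> 'a set \<Rightarrow> 'a \<Rightarrow> bool" where
  "weak_point le S x \<longleftrightarrow>
     contractible_poset le {y\<in>S. le y x \<and> y \<noteq> x}
   \<or> contractible_poset le {y\<in>S. le x y \<and> y \<noteq> x}"

inductive collapses :: "('a \<Rightarrow> 'a \<Rightarrow> bool) \<Rightarrow> 'a set \<Rightarrow> 'a set \<Rightarrow> bool" for le where
  refl: "collapses le Y Y"
| step: "\<lbrakk>x \<in> Y; weak_point le Y x; collapses le (Y - {x}) Z\<rbrakk> \<Longrightarrow> collapses le Y Z"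

text \<open>Geometric realization of the order complex of (S, le): barycentric-coordinate functions
supported on a chain of S, with the subspace topology of the product topology on 'a \<Rightarrow> real.\<close>
definition order_complex_realization :: "('a \<Rightarrow> 'a \<Rightarrow> bool) \<Rightarrow> 'a set \<Rightarrow> ('a \<Rightarrow> real) set" where
  "order_complex_realization le S =
     {g. (\<forall>v. 0 \<le> g v) \<and> {v. g v \<noteq> 0} \<subseteq> S
       \<and> (\<forall>v\<in>{v. g v \<noteq> 0}. \<forall>w\<in>{v. g v \<noteq> 0}. le v w \<or> le w v)
       \<and> sum g S = 1}"

definition weak_equivalent ::
  "('a \<Rightarrow> 'a \<Rightarrow> bool) \<Rightarrow> 'a set \<Rightarrow> ('c \<Rightarrow> 'c \<Rightarrow> bool) \<Rightarrow> 'c set \<Rightarrow> bool" where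
  "weak_equivalent le S le' S' \<longleftrightarrow>
     top_of_set (order_complex_realization le S)
       homotopy_equivalent_space top_of_set (order_complex_realization le' S')"

end

theory Submission imports Defs begin

lemma cont_snd_app[continuous_intros]:
  "continuous_on S (\<lambda>z::'c::topological_space \<times> ('a \<Rightarrow> real). snd z w)"
  by (rule continuous_on_compose2[OF continuous_on_product_coordinates continuous_on_snd]) auto

definition rs :: "'a \<Rightarrow> 'a \<Rightarrow> ('a \<Rightarrow> real) \<Rightarrow> ('a \<Rightarrow> real)" where
  "rs x m g = (\<lambda>v. if v = x then 0 else if v = m then g m + g x else g v)"

lemma rs_cont: "continuous_on S (\<lambda>z::'c::topological_space \<times> ('a \<Rightarrow> real). rs x m (snd z) v)"
proof -
  consider "v = x" | "v \<noteq> x" "v = m" | "v \<noteq> x" "v \<noteq> m" by blast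
  then show ?thesis
  proof cases
    case 1 then show ?thesis by (simp add: rs_def)
  next
    case 2 then show ?thesis unfolding rs_def by (simp add: continuous_on_add cont_snd_app)
  next
    case 3 then show ?thesis unfolding rs_def by (simp add: cont_snd_app)
  qed
qed

lemma Hc: "continuous_on ({0..1} \<times> R) (\<lambda>(t::real, g::'a \<Rightarrow> real). (\<lambda>v. (1 - t) * g v + t * rs x m g v))"
proof (rule continuous_on_coordinatewise_then_product)
  fix v
  have "continuous_on ({0..1} \<times> R) (\<lambda>z::real \<times> ('a \<Rightarrow> real). (1 - fst z) * snd z v + fst z * rs x m (snd z) v)"
    by (intro continuous_on_add continuous_on_mult continuous_on_diff continuous_on_const continuous_on_fst continuous_on_id cont_snd_app rs_cont)
  then show "continuous_on ({0..1} \<times> R) (\<lambda>z. (case z of (t, g) \<Rightarrow> \<lambda>v. (1 - t) * g v + t * rs x m g v) v)"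
    by (simp add: case_prod_beta)
qed

lemma rs_cont2: "continuous_on S (rs x m)"
proof (rule continuous_on_coordinatewise_then_product)
  fix v
  have "continuous_on (UNIV \<times> S) (\<lambda>z::real \<times> ('a \<Rightarrow> real). rs x m (snd z) v)" by (rule rs_cont)
  then have "continuous_on S ((\<lambda>z::real \<times> ('a \<Rightarrow> real). rs x m (snd z) v) \<circ> Pair 0)"
    by (rule continuous_on_o_Pair) auto
  then show "continuous_on S (\<lambda>g. rs x m g v)" by (simp add: o_def)
qed

lemma sum_rs:
  assumes "finite S" "x \<in> S" "m \<in> S" "m \<noteq> x"
  shows "sum (rs x m g) S = sum g S"
proof -
  have a: "sum (rs x m g) S = rs x m g x + rs x m g m + sum (rs x m g) (S - {x} - {m})"
    using assms by (simp add: sum.remove)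
  have b: "sum (rs x m g) (S - {x} - {m}) = sum g (S - {x} - {m})"
    by (rule sum.cong) (auto simp: rs_def)
  have c: "sum g S = g x + g m + sum g (S - {x} - {m})"
    using assms by (simp add: sum.remove)
  show ?thesis using a b c assms by (simp add: rs_def)
qed

lemma fp_sub: "finite_poset S le \<Longrightarrow> T \<subseteq> S \<Longrightarrow> finite_poset T le"
  unfolding finite_poset_def by (meson finite_subset subsetD)

lemma ocr_remove:
  assumes h: "h \<in> order_complex_realization le S" and hx: "h x = 0" and fin: "finite S" and xS: "x \<in> S"
  shows "h \<in> order_complex_realization le (S - {x})"
proof -
  have "sum h S = h x + sum h (S - {x})" using fin xS by (simp add: sum.remove)
  then have "sum h (S - {x}) = 1" using h hx unfolding order_complex_realization_def by simp
  moreover have "{v. h v \<noteq> 0} \<subseteq> S - {x}" using h hx unfolding order_complex_realization_def by auto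
  ultimately show ?thesis using h unfolding order_complex_realization_def by blast
qed

lemma beat_homotopy:
  assumes fp: "finite_poset S le" and xS: "x \<in> S" and ub: "up_beat_point le S x"
  shows "weak_equivalent le S le (S - {x})"
proof -
  obtain m where mS: "m \<in> S" and xm: "le x m" and mx: "m \<noteq> x"
    and mmin: "\<And>y. y \<in> S \<Longrightarrow> le x y \<Longrightarrow> y \<noteq> x \<Longrightarrow> le m y"
    using ub unfolding up_beat_point_def by auto
  have fin: "finite S" and refl: "\<And>y. y \<in> S \<Longrightarrow> le y y"
    and trans: "\<And>a b c. a \<in> S \<Longrightarrow> b \<in> S \<Longrightarrow> c \<in> S \<Longrightarrow> le a b \<Longrightarrow> le b c \<Longrightarrow> le a c"
    using fp unfolding finite_poset_def by blast+
  define R where "R = order_complex_realization le S"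
  define R' where "R' = order_complex_realization le (S - {x})"
  define H where "H = (\<lambda>(t::real, g::'a \<Rightarrow> real). (\<lambda>v. (1 - t) * g v + t * rs x m g v))"
  have R'R: "R' \<subseteq> R"
  proof
    fix g assume g: "g \<in> R'"
    have gx: "g x = 0" using g unfolding R'_def order_complex_realization_def by auto
    have "sum g S = sum g (S - {x})" using fin xS gx by (simp add: sum.remove)
    then show "g \<in> R" using g unfolding R'_def R_def order_complex_realization_def by auto
  qed
  have Hmem: "H (t, g) \<in> R" if t: "t \<in> {0..1}" and g: "g \<in> R" for t g
  proof -
    have g0: "\<And>v. 0 \<le> g v" and gS: "{v. g v \<noteq> 0} \<subseteq> S"
      and gc: "\<And>v w. g v \<noteq> 0 \<Longrightarrow> g w \<noteq> 0 \<Longrightarrow> le v w \<or> le w v"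
      and g1: "sum g S = 1"
      using g unfolding R_def order_complex_realization_def by auto
    have rs0: "0 \<le> rs x m g v" for v using g0 by (simp add: rs_def add_nonneg_nonneg)
    have nn: "0 \<le> H (t,g) v" for v
      using t g0[of v] rs0[of v] by (simp add: H_def)
    have supp: "H (t,g) v \<noteq> 0 \<Longrightarrow> g v \<noteq> 0 \<or> (v = m \<and> g x \<noteq> 0)" for v
      by (auto simp: H_def rs_def split: if_splits)
    have comp: "le v w \<or> le w v" if "H (t,g) v \<noteq> 0" "H (t,g) w \<noteq> 0" for v w
    proof -
      have cm: "le u m \<or> le m u" if "g u \<noteq> 0" "g x \<noteq> 0" for u
      proof -
        have uS: "u \<in> S" using gS that by auto
        from gc[OF that] show ?thesis
        proof
          assume "le u x" then show ?thesis using trans[OF uS xS mS] xm by blast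
        next
          assume "le x u" then show ?thesis
            using mmin[OF uS] by (cases "u = x") (use xm in auto)
        qed
      qed
      from supp[OF that(1)] supp[OF that(2)] show ?thesis
      proof (elim disjE conjE)
        assume "g v \<noteq> 0" "g w \<noteq> 0" then show ?thesis using gc by blast
      next
        assume "g v \<noteq> 0" "w = m" "g x \<noteq> 0" then show ?thesis using cm by blast
      next
        assume "v = m" "g x \<noteq> 0" "g w \<noteq> 0" then show ?thesis using cm by blast
      next
        assume "v = m" "w = m" then show ?thesis using refl[OF mS] by simp
      qed
    qed
    have "sum (H (t,g)) S = (1 - t) * sum g S + t * sum (rs x m g) S"
      by (simp add: H_def sum.distrib sum_distrib_left)
    also have "\<dots> = 1" using sum_rs[OF fin xS mS mx] g1 by simp
    finally have "sum (H (t,g)) S = 1" .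
    moreover have "{v. H (t,g) v \<noteq> 0} \<subseteq> S" using supp gS mS by auto
    ultimately show ?thesis using nn comp unfolding R_def order_complex_realization_def by auto
  qed
  have H1: "H (1, g) = rs x m g" for g by (simp add: H_def)
  have H0: "H (0, g) = g" for g by (simp add: H_def)
  have rsR': "rs x m g \<in> R'" if g: "g \<in> R" for g
  proof -
    have a: "rs x m g \<in> R" using Hmem[OF _ g, of 1] H1 by simp
    have b: "rs x m g x = 0" by (simp add: rs_def)
    show ?thesis unfolding R'_def by (rule ocr_remove[OF a[unfolded R_def] b fin xS])
  qed
  have rsid: "rs x m g = g" if "g \<in> R'" for g
  proof -
    have "g x = 0" using that unfolding R'_def order_complex_realization_def by auto
    then show ?thesis by (auto simp: rs_def)
  qed
  have Hcont: "continuous_on ({0..1} \<times> R) H"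
    unfolding H_def by (rule Hc)
  have hom: "homotopic_with (\<lambda>x. True) (top_of_set R) (top_of_set R) (id \<circ> rs x m) id"
  proof -
    have "homotopic_with (\<lambda>x. True) (top_of_set R) (top_of_set R) id (rs x m)"
      unfolding homotopic_with_def
      apply (rule exI[of _ H])
      using Hcont Hmem H0 H1
      by (auto simp: continuous_map_in_subtopology)
    then show ?thesis by (simp add: homotopic_with_sym)
  qed
  have "retraction_maps (top_of_set R) (top_of_set R') (rs x m) id"
    unfolding retraction_maps_def using rsR' rsid R'R rs_cont2
    by (auto simp: continuous_map_in_subtopology continuous_on_id)
  then show ?thesis unfolding weak_equivalent_def R_def[symmetric] R'_def[symmetric]
    using deformation_retraction_imp_homotopy_equivalent_space[OF hom] by blast
qed


lemma contr_min:
  "finite_poset S le \<Longrightarrow> m \<in> S \<Longrightarrow> \<forall>y\<in>S. le m y \<Longrightarrow> contractible_poset le S"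
proof (induction "card S" arbitrary: S rule: less_induct)
  case less
  have fin: "finite S" and refl: "\<And>y. y \<in> S \<Longrightarrow> le y y"
    and anti: "\<And>a b. a \<in> S \<Longrightarrow> b \<in> S \<Longrightarrow> le a b \<Longrightarrow> le b a \<Longrightarrow> a = b"
    and trans: "\<And>a b c. a \<in> S \<Longrightarrow> b \<in> S \<Longrightarrow> c \<in> S \<Longrightarrow> le a b \<Longrightarrow> le b c \<Longrightarrow> le a c"
    using less.prems(1) unfolding finite_poset_def by blast+
  show ?case
  proof (cases "S = {m}")
    case True then show ?thesis by (simp add: contractible_poset.single)
  next
    case False
    then have ne: "S - {m} \<noteq> {}" using less.prems by auto
    define D where "D z = card {y \<in> S - {m}. le y z}" for z
    obtain x0 where "x0 \<in> S - {m}" using ne by blast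
    then obtain x where x: "x \<in> S - {m}" and xmin: "\<And>y. y \<in> S - {m} \<Longrightarrow> D x \<le> D y"
      using ex_has_least_nat[where P="\<lambda>z. z \<in> S - {m}" and m=D] by blast
    have xS: "x \<in> S" using x by simp
    have db: "down_beat_point le S x"
      unfolding down_beat_point_def
    proof (rule bexI[of _ m], intro ballI)
      show "m \<in> {y \<in> S. le y x \<and> y \<noteq> x}" using less.prems x by auto
    next
      fix y assume y: "y \<in> {y \<in> S. le y x \<and> y \<noteq> x}"
      show "le y m"
      proof (cases "y = m")
        case True then show ?thesis using refl less.prems by simp
      next
        case False
        have yS: "y \<in> S" using y by simp
        have sub: "{z \<in> S - {m}. le z y} \<subset> {z \<in> S - {m}. le z x}"
        proof
          show "{z \<in> S - {m}. le z y} \<subseteq> {z \<in> S - {m}. le z x}"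
            using y trans[OF _ yS xS] by auto
          have "x \<notin> {z \<in> S - {m}. le z y}" using y anti[OF xS yS] by auto
          then show "{z \<in> S - {m}. le z y} \<noteq> {z \<in> S - {m}. le z x}" using x refl[OF xS] by auto
        qed
        then have "D y < D x" unfolding D_def by (rule psubset_card_mono[rotated]) (use fin in auto)
        moreover have "D x \<le> D y" using xmin False yS by simp
        ultimately show ?thesis by simp
      qed
    qed
    have fp': "finite_poset (S - {x}) le" by (rule fp_sub[OF less.prems(1)]) blast
    have m': "m \<in> S - {x}" using x less.prems(2) by blast
    have mm': "\<forall>y\<in>S - {x}. le m y" using less.prems(3) by blast
    have "contractible_poset le (S - {x})"
      by (rule less.hyps[OF card_Diff1_less[OF fin xS] fp' m' mm'])
    then show ?thesis using db by (intro contractible_poset.remove[OF xS]) simp_all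
  qed
qed

lemma beat_weak:
  assumes fp: "finite_poset S le" and ub: "up_beat_point le S x"
  shows "weak_point le S x"
proof -
  obtain m where m: "m \<in> {y\<in>S. le x y \<and> y \<noteq> x}" and mm: "\<forall>y\<in>{y\<in>S. le x y \<and> y \<noteq> x}. le m y"
    using ub unfolding up_beat_point_def by blast
  have "contractible_poset le {y\<in>S. le x y \<and> y \<noteq> x}"
    by (rule contr_min[OF fp_sub[OF fp] m mm]) auto
  then show ?thesis unfolding weak_point_def by blast
qed

lemma hocolim_fp:
  assumes fpP: "finite_poset P le" and D: "poset_diagram P le X leX f" and QP: "Q \<subseteq> P"
  shows "finite_poset (hocolim_carrier Q X) (hocolim_le le leX f)"
proof -
  have finP: "finite P" and reflP: "\<And>y. y \<in> P \<Longrightarrow> le y y"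
    and antiP: "\<And>a b. a \<in> P \<Longrightarrow> b \<in> P \<Longrightarrow> le a b \<Longrightarrow> le b a \<Longrightarrow> a = b"
    using fpP unfolding finite_poset_def by blast+
  have fpX: "\<And>p. p \<in> P \<Longrightarrow> finite_poset (X p) (leX p)"
    and fX: "\<And>p q x. p \<in> P \<Longrightarrow> q \<in> P \<Longrightarrow> le p q \<Longrightarrow> x \<in> X p \<Longrightarrow> f p q x \<in> X q"
    and mono: "\<And>p q x y. p \<in> P \<Longrightarrow> q \<in> P \<Longrightarrow> le p q \<Longrightarrow> x \<in> X p \<Longrightarrow> y \<in> X p \<Longrightarrow> leX p x y \<Longrightarrow> leX q (f p q x) (f p q y)"
    and fid: "\<And>p x. p \<in> P \<Longrightarrow> x \<in> X p \<Longrightarrow> f p p x = x"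
    and fcomp: "\<And>p q r x. p \<in> P \<Longrightarrow> q \<in> P \<Longrightarrow> r \<in> P \<Longrightarrow> le p q \<Longrightarrow> le q r \<Longrightarrow> x \<in> X p \<Longrightarrow> f q r (f p q x) = f p r x"
    using D unfolding poset_diagram_def by blast+
  have carr: "hocolim_carrier Q X = Sigma Q X" unfolding hocolim_carrier_def by auto
  have "finite (Sigma Q X)"
    using finP QP fpX by (intro finite_SigmaI) (auto intro: finite_subset simp: finite_poset_def)
  moreover have "\<forall>u\<in>Sigma Q X. hocolim_le le leX f u u"
  proof
    fix u assume "u \<in> Sigma Q X"
    then obtain p x where u: "u = (p,x)" "p \<in> P" "x \<in> X p" using QP by auto
    show "hocolim_le le leX f u u" using u reflP fid fpX[of p]
      unfolding hocolim_le_def finite_poset_def by auto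
  qed
  moreover have "\<forall>u\<in>Sigma Q X. \<forall>v\<in>Sigma Q X. hocolim_le le leX f u v \<and> hocolim_le le leX f v u \<longrightarrow> u = v"
  proof (intro ballI impI)
    fix u v assume "u \<in> Sigma Q X" "v \<in> Sigma Q X" and h: "hocolim_le le leX f u v \<and> hocolim_le le leX f v u"
    obtain p x where u: "u = (p,x)" "p \<in> P" "x \<in> X p" using \<open>u \<in> Sigma Q X\<close> QP by auto
    obtain q y where v: "v = (q,y)" "q \<in> P" "y \<in> X q" using \<open>v \<in> Sigma Q X\<close> QP by auto
    have l1: "le p q" and l2: "le q p" and m1: "leX q (f p q x) y" and m2: "leX p (f q p y) x"
      using h u v unfolding hocolim_le_def by simp_all
    have pq: "p = q" using antiP[OF u(2) v(2) l1 l2] .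
    have antiX: "\<And>a b. a \<in> X p \<Longrightarrow> b \<in> X p \<Longrightarrow> leX p a b \<Longrightarrow> leX p b a \<Longrightarrow> a = b"
      using fpX[OF u(2)] unfolding finite_poset_def by blast
    have "leX p x y" "leX p y x" using m1 m2 pq fid[OF u(2) u(3)] fid[OF v(2) v(3)] by simp_all
    then have "x = y" using antiX u(3) v(3) pq by blast
    then show "u = v" using u v pq by simp
  qed
  moreover have "\<forall>u\<in>Sigma Q X. \<forall>v\<in>Sigma Q X. \<forall>w\<in>Sigma Q X. hocolim_le le leX f u v \<and> hocolim_le le leX f v w \<longrightarrow> hocolim_le le leX f u w"
  proof (intro ballI impI)
    fix u v w assume "u \<in> Sigma Q X" "v \<in> Sigma Q X" "w \<in> Sigma Q X"
      and h: "hocolim_le le leX f u v \<and> hocolim_le le leX f v w"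
    obtain p x where u: "u = (p,x)" "p \<in> P" "x \<in> X p" using \<open>u \<in> Sigma Q X\<close> QP by auto
    obtain q y where v: "v = (q,y)" "q \<in> P" "y \<in> X q" using \<open>v \<in> Sigma Q X\<close> QP by auto
    obtain r z where w: "w = (r,z)" "r \<in> P" "z \<in> X r" using \<open>w \<in> Sigma Q X\<close> QP by auto
    have pq: "le p q" and qr: "le q r" and xy: "leX q (f p q x) y" and yz: "leX r (f q r y) z"
      using h u v w unfolding hocolim_le_def by auto
    have pr: "le p r" using fpP pq qr u v w unfolding finite_poset_def by blast
    have a: "leX r (f q r (f p q x)) (f q r y)"
      using mono[OF v(2) w(2) qr fX[OF u(2) v(2) pq u(3)] v(3) xy] .
    have b: "f q r (f p q x) = f p r x" using fcomp u v w pq qr by blast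
    have transR: "\<And>a b c. a \<in> X r \<Longrightarrow> b \<in> X r \<Longrightarrow> c \<in> X r \<Longrightarrow> leX r a b \<Longrightarrow> leX r b c \<Longrightarrow> leX r a c"
      using fpX[OF w(2)] unfolding finite_poset_def by blast
    have "leX r (f p r x) z"
      using transR[OF fX[OF u(2) w(2) pr u(3)] fX[OF v(2) w(2) qr v(3)] w(3)] a b yz by simp
    then show "hocolim_le le leX f u w" using pr u w unfolding hocolim_le_def by simp
  qed
  ultimately show ?thesis unfolding carr finite_poset_def by blast
qed

theorem proposition2p4:
  fixes P :: "'a set" and le :: "'a \<Rightarrow> 'a \<Rightarrow> bool"
    and X :: "'a \<Rightarrow> 'b set" and leX :: "'a \<Rightarrow> 'b \<Rightarrow> 'b \<Rightarrow> bool"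
    and f :: "'a \<Rightarrow> 'a \<Rightarrow> 'b \<Rightarrow> 'b" and p :: 'a
  assumes "finite_poset P le"
    and "poset_diagram P le X leX f"
    and "p \<in> P"
    and "up_beat_point le P p"
  shows "collapses (hocolim_le le leX f) (hocolim_carrier P X) (hocolim_carrier (P - {p}) X)
       \<and> weak_equivalent (hocolim_le le leX f) (hocolim_carrier P X)
                         (hocolim_le le leX f) (hocolim_carrier (P - {p}) X)"
proof -
  note fpP = assms(1) and D = assms(2) and pP = assms(3)
  have fpX: "\<And>p. p \<in> P \<Longrightarrow> finite_poset (X p) (leX p)"
    and fX: "\<And>p q x. p \<in> P \<Longrightarrow> q \<in> P \<Longrightarrow> le p q \<Longrightarrow> x \<in> X p \<Longrightarrow> f p q x \<in> X q"
    and fid: "\<And>p x. p \<in> P \<Longrightarrow> x \<in> X p \<Longrightarrow> f p p x = x"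
    and fcomp: "\<And>p q r x. p \<in> P \<Longrightarrow> q \<in> P \<Longrightarrow> r \<in> P \<Longrightarrow> le p q \<Longrightarrow> le q r \<Longrightarrow> x \<in> X p \<Longrightarrow> f q r (f p q x) = f p r x"
    using D unfolding poset_diagram_def by blast+
  obtain q where q: "q \<in> P" "le p q" "q \<noteq> p" and qmin: "\<And>r. r \<in> P \<Longrightarrow> le p r \<Longrightarrow> r \<noteq> p \<Longrightarrow> le q r"
    using assms(4) unfolding up_beat_point_def by auto
  have finXp: "finite (X p)" and reflXp: "\<And>y. y \<in> X p \<Longrightarrow> leX p y y"
    and antiXp: "\<And>a b. a \<in> X p \<Longrightarrow> b \<in> X p \<Longrightarrow> leX p a b \<Longrightarrow> leX p b a \<Longrightarrow> a = b"
    and transXp: "\<And>a b c. a \<in> X p \<Longrightarrow> b \<in> X p \<Longrightarrow> c \<in> X p \<Longrightarrow> leX p a b \<Longrightarrow> leX p b c \<Longrightarrow> leX p a c"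
    using fpX[OF pP] unfolding finite_poset_def by blast+
  define hl where "hl = hocolim_le le leX f"
  define Q0 where "Q0 = hocolim_carrier (P - {p}) X"
  define Y where "Y A = Q0 \<union> ({p} \<times> A)" for A
  have main: "collapses hl (Y A) Q0 \<and> weak_equivalent hl (Y A) hl Q0" if "A \<subseteq> X p" for A
    using that
  proof (induction "card A" arbitrary: A rule: less_induct)
    case less
    show ?case
    proof (cases "A = {}")
      case True
      then have "Y A = Q0" unfolding Y_def by simp
      then show ?thesis
        by (simp add: collapses.refl weak_equivalent_def homotopy_equivalent_space_refl)
    next
      case False
      have finA: "finite A" using less.prems finXp finite_subset by blast
      define U where "U z = card {y \<in> A. leX p z y}" for z
      obtain x0 where "x0 \<in> A" using False by blast
      then obtain x where xA: "x \<in> A" and xmin: "\<And>y. y \<in> A \<Longrightarrow> U x \<le> U y"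
        using ex_has_least_nat[where P="\<lambda>z. z \<in> A" and m=U] by blast
      have xX: "x \<in> X p" using xA less.prems by auto
      have xmax: "\<not> leX p x y" if "y \<in> A" "y \<noteq> x" for y
      proof
        assume xy: "leX p x y"
        have yX: "y \<in> X p" using that less.prems by auto
        have "{z \<in> A. leX p y z} \<subset> {z \<in> A. leX p x z}"
        proof
          show "{z \<in> A. leX p y z} \<subseteq> {z \<in> A. leX p x z}"
            using xy transXp[OF xX yX] less.prems by auto
          have "x \<notin> {z \<in> A. leX p y z}" using that xy antiXp[OF xX yX] by auto
          then show "{z \<in> A. leX p y z} \<noteq> {z \<in> A. leX p x z}" using xA reflXp[OF xX] by auto
        qed
        then have "U y < U x" unfolding U_def by (rule psubset_card_mono[rotated]) (use finA in auto)
        moreover have "U x \<le> U y" using xmin that by simp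
        ultimately show False by simp
      qed
      have YsubP: "Y A \<subseteq> hocolim_carrier P X"
        using less.prems pP unfolding Y_def Q0_def hocolim_carrier_def by auto
      have fpY: "finite_poset (Y A) hl"
        unfolding hl_def by (rule fp_sub[OF hocolim_fp[OF fpP D order_refl] YsubP])
      have pxY: "(p, x) \<in> Y A" unfolding Y_def using xA by simp
      have fqx: "f p q x \<in> X q" using fX[OF pP q(1) q(2) xX] .
      have ub: "up_beat_point hl (Y A) (p, x)"
        unfolding up_beat_point_def
      proof (rule bexI[of _ "(q, f p q x)"], intro ballI)
        have "(q, f p q x) \<in> Y A" using q fqx unfolding Y_def Q0_def hocolim_carrier_def by auto
        moreover have "hl (p,x) (q, f p q x)"
          using q fqx fpX[OF q(1)] unfolding hl_def hocolim_le_def finite_poset_def by auto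
        ultimately show "(q, f p q x) \<in> {y \<in> Y A. hl (p, x) y \<and> y \<noteq> (p, x)}" using q by auto
      next
        fix u assume u: "u \<in> {y \<in> Y A. hl (p, x) y \<and> y \<noteq> (p, x)}"
        obtain r z where uu: "u = (r, z)" by (cases u)
        have hu: "le p r" "leX r (f p r x) z" using u uu unfolding hl_def hocolim_le_def by auto
        show "hl (q, f p q x) u"
        proof (cases "r = p")
          case True
          then have "z \<in> A" "z \<noteq> x" using u uu unfolding Y_def Q0_def hocolim_carrier_def by auto
          moreover have "leX p x z" using hu True fid[OF pP xX] by simp
          ultimately show ?thesis using xmax by blast
        next
          case False
          then have rP: "r \<in> P" and zX: "z \<in> X r" using u uu unfolding Y_def Q0_def hocolim_carrier_def by auto
          have qr: "le q r" using qmin[OF rP hu(1) False] .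
          have "f q r (f p q x) = f p r x" using fcomp[OF pP q(1) rP q(2) qr xX] .
          then show ?thesis using qr hu uu unfolding hl_def hocolim_le_def by simp
        qed
      qed
      have Yrem: "Y A - {(p, x)} = Y (A - {x})"
        unfolding Y_def Q0_def hocolim_carrier_def by auto
      have IH: "collapses hl (Y (A - {x})) Q0 \<and> weak_equivalent hl (Y (A - {x})) hl Q0"
        using less.hyps[of "A - {x}", OF card_Diff1_less[OF finA xA]] less.prems by blast
      have c: "collapses hl (Y A) Q0"
        using collapses.step[OF pxY beat_weak[OF fpY ub]] IH Yrem by simp
      have "weak_equivalent hl (Y A) hl (Y A - {(p,x)})"
        by (rule beat_homotopy[OF fpY pxY ub])
      then have w1: "weak_equivalent hl (Y A) hl (Y (A - {x}))" by (simp only: Yrem)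
      have w2: "weak_equivalent hl (Y (A - {x})) hl Q0" using IH by (rule conjunct2)
      have "weak_equivalent hl (Y A) hl Q0"
        unfolding weak_equivalent_def
        by (rule homotopy_eqv_trans[OF w1[unfolded weak_equivalent_def] w2[unfolded weak_equivalent_def]])
      then show ?thesis using c by simp
    qed
  qed
  have eq: "hocolim_carrier P X = Y (X p)"
    unfolding Y_def Q0_def hocolim_carrier_def using pP by auto
  have M: "collapses hl (Y (X p)) Q0 \<and> weak_equivalent hl (Y (X p)) hl Q0"
    by (rule main) (rule order_refl)
  then have "collapses hl (hocolim_carrier P X) Q0 \<and> weak_equivalent hl (hocolim_carrier P X) hl Q0"
    by (simp only: eq)
  then show ?thesis unfolding hl_def Q0_def .
qed

end
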